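(* Let $\alpha\in(0,2)$ and let $J:\mathbb R^d\to\mathbb R$ be bounded measurable with $\int_{r<|z|\le R}z\,J(z)|z|^{-d-1}dz=0$ for all $0<r<R<\infty$. Let $T>0$ and $G_t(x):(0,T)\times\mathbb R^d\to\mathbb R$ be $C^2$ in $x$, and suppose that for each $j=0,1,2$ there are $C_j>0$, $\beta_j\ge0$ with $|\nabla^jG_t(x)|\le C_j\eta_{\alpha,\alpha-\beta_j-j}(t,x)$ for $t\in(0,T)$, $x\in\mathbb R^d$. Then for any $\gamma\in[0,(2-\alpha)\wedge1)$ there is $C=C(\gamma,d,\alpha)>0$ with $$|\widetilde{\mathscr L}^JG_t(x)|\le C\|J\|_\infty\Big(C_0t^{-\beta_0/2}+C_1t^{-\beta_1/2}+C_1^\gamma C_2^{1-\gamma}t^{-\frac{\gamma\beta_1+(1-\gamma)\beta_2}2}\Big)\eta_{\alpha,0}(t,x).$$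
   Context: $\eta_{\alpha,\gamma}(t,x):=t^{\gamma/2}(|x|+t^{1/2})^{-d-\alpha}$. $z^{(\alpha)}:=z1_{\alpha\in(1,2)}+z1_{\{|z|\le1\}}1_{\alpha=1}$; $\widetilde{\mathscr L}^Jf(x):=\int_{\mathbb R^d}(f(x+z)-f(x)-z^{(\alpha)}\cdot\nabla f(x))J(z)|z|^{-d-\alpha}dz$. $d\ge2$. *)

theory Defs
  imports "HOL-Analysis.Analysis"
begin

definition eta :: "real \<Rightarrow> real \<Rightarrow> real \<Rightarrow> 'a::euclidean_space \<Rightarrow> real" where
  "eta \<alpha> \<gamma> t x = t powr (\<gamma> / 2) * (norm x + sqrt t) powr (- real DIM('a) - \<alpha>)"

definition zalpha :: "real \<Rightarrow> 'a::euclidean_space \<Rightarrow> 'a" where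
  "zalpha \<alpha> z = (if 1 < \<alpha> \<and> \<alpha> < 2 then z
                   else if \<alpha> = 1 \<and> norm z \<le> 1 then z else 0)"

definition opLJ :: "real \<Rightarrow> ('a::euclidean_space \<Rightarrow> real) \<Rightarrow> ('a \<Rightarrow> real) \<Rightarrow> 'a \<Rightarrow> real" where
  "opLJ \<alpha> J f x = (LINT z|lborel.
      (f (x + z) - f x - frechet_derivative f (at x) (zalpha \<alpha> z))
        * J z * norm z powr (- real DIM('a) - \<alpha>))"

definition supnorm :: "('a \<Rightarrow> real) \<Rightarrow> real" where
  "supnorm J = (SUP z. \<bar>J z\<bar>)"

end

theory Submission
  imports Defs
begin


lemma exists_dyadic:
  fixes y :: real assumes "1 \<le> y"
  shows "\<exists>k::nat. 2 ^ k \<le> y \<and> y < 2 ^ Suc k"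
proof -
  obtain n where n: "y < (2::real) ^ n" using real_arch_pow[of 2 y] by auto
  define m where "m = (LEAST n. y < (2::real) ^ n)"
  have m1: "y < 2 ^ m" unfolding m_def by (rule LeastI[of _ n]) (rule n)
  have "m \<noteq> 0" using m1 assms by (cases "m = 0") auto
  then obtain k where k: "m = Suc k" by (cases m) auto
  have "\<not> y < 2 ^ k"
  proof
    assume "y < 2 ^ k"
    then have "m \<le> k" unfolding m_def by (rule Least_le)
    with k show False by simp
  qed
  with m1 k show ?thesis by (intro exI[of _ k]) auto
qed

lemma cball_borel_meas[measurable]: "cball (c::'a::euclidean_space) r \<in> sets borel"
  by (simp add: borel_closed)

lemma shell_sum:
  fixes F :: "'a::euclidean_space \<Rightarrow> real" and c R :: "nat \<Rightarrow> real"
  assumes pw: "\<And>z. ennreal (F z) \<le> (\<Sum>k. ennreal (c k) * indicator (cball (0::'a) (R k)) z)"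
    and c: "\<And>k. 0 \<le> c k" and R: "\<And>k. 0 \<le> R k"
    and S: "(\<lambda>k. c k * (unit_ball_vol (DIM('a)) * R k ^ DIM('a))) sums S"
  shows "(\<integral>\<^sup>+ z. ennreal (F z) \<partial>lborel) \<le> ennreal S"
proof -
  have "(\<integral>\<^sup>+ z. ennreal (F z) \<partial>lborel) \<le> (\<integral>\<^sup>+ z. (\<Sum>k. ennreal (c k) * indicator (cball (0::'a) (R k)) z) \<partial>lborel)"
    by (rule nn_integral_mono) (rule pw)
  also have "\<dots> = (\<Sum>k. \<integral>\<^sup>+ z. ennreal (c k) * indicator (cball (0::'a) (R k)) z \<partial>lborel)"
    by (rule nn_integral_suminf) measurable
  also have "\<dots> = (\<Sum>k. ennreal (c k * (unit_ball_vol (DIM('a)) * R k ^ DIM('a))))"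
    apply (rule suminf_cong)
    apply (subst nn_integral_cmult_indicator)
    using R c by (auto simp: emeasure_cball ennreal_mult)
  also have "\<dots> = ennreal S"
    by (rule suminf_ennreal_eq) (use c R S in auto)
  finally show ?thesis .
qed



definition KF :: "nat \<Rightarrow> real \<Rightarrow> real" where
  "KF d a = unit_ball_vol (real d) * 2 ^ d / (1 - 2 powr (-a))"

definition KN :: "nat \<Rightarrow> real \<Rightarrow> real" where
  "KN d q = unit_ball_vol (real d) * 2 powr (real d - q) / (1 - 2 powr (-q))"

lemma pow2_powr_k: "((2::real) ^ k) powr (-a) = (2 powr (-a)) ^ k"
  by (simp add: powr_realpow[symmetric] powr_powr mult.commute)

lemma le_suminf_ennreal: "(f k :: ennreal) \<le> (\<Sum>k. f k)"
  using sum_le_suminf[of f "{k}"] by (auto intro: summableI)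

lemma far_int:
  fixes s a :: real
  assumes s: "0 < s" and a: "0 < a"
  shows "(\<integral>\<^sup>+ z. ennreal (indicator {z::'a::euclidean_space. s < norm z} z * norm z powr (- real DIM('a) - a)) \<partial>lborel)
     \<le> ennreal (KF DIM('a) a * s powr (-a))"
proof -
  define d where "d = DIM('a)"
  define c where "c k = ((2::real) ^ k * s) powr (- real d - a)" for k :: nat
  define R where "R k = (2::real) ^ Suc k * s" for k :: nat
  have q1: "2 powr (-a) < (1::real)" using a by (simp add: powr_less_one)
  show ?thesis
  proof (rule shell_sum[where c = c and R = R])
    fix z :: 'a
    show "ennreal (indicator {z. s < norm z} z * norm z powr (- real DIM('a) - a))
          \<le> (\<Sum>k. ennreal (c k) * indicator (cball 0 (R k)) z)"
    proof (cases "s < norm z")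
      case True
      then have "1 \<le> norm z / s" using s by simp
      then obtain k where k: "2 ^ k \<le> norm z / s" "norm z / s < 2 ^ Suc k"
        using exists_dyadic by blast
      have k1: "2 ^ k * s \<le> norm z" using k(1) s by (simp add: le_divide_eq)
      have k2: "norm z \<le> R k" using k(2) s unfolding R_def by (simp add: divide_less_eq)
      have ck: "norm z powr (- real DIM('a) - a) \<le> c k"
        unfolding c_def d_def using k1 s a by (intro powr_mono2') auto
      have "ennreal (indicator {z. s < norm z} z * norm z powr (- real DIM('a) - a))
          \<le> ennreal (c k) * indicator (cball 0 (R k)) z"
      proof -
        have i1: "indicator {z. s < norm z} z = (1::real)" using True by simp
        have i2: "indicator (cball (0::'a) (R k)) z = (1::ennreal)" using k2 by simp
        show ?thesis unfolding i1 i2 using ennreal_leI[OF ck] by simp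
      qed
      also have "\<dots> \<le> (\<Sum>k. ennreal (c k) * indicator (cball 0 (R k)) z)"
        by (rule le_suminf_ennreal)
      finally show ?thesis .
    qed (simp add: indicator_def)
  next
    show "\<And>k. 0 \<le> c k" by (simp add: c_def)
    show "\<And>k. 0 \<le> R k" using s by (simp add: R_def)
    have eq: "c k * (unit_ball_vol (DIM('a)) * R k ^ DIM('a))
        = (unit_ball_vol (DIM('a)) * 2 ^ DIM('a) * s powr (-a)) * (2 powr (-a)) ^ k" for k
    proof -
      have p: "0 < (2::real) ^ k * s" using s by simp
      have "R k ^ DIM('a) = 2 ^ DIM('a) * ((2::real) ^ k * s) powr real d"
        using p by (simp add: R_def d_def powr_realpow power_mult_distrib)
      then have "c k * R k ^ DIM('a) = 2 ^ DIM('a) * ((2::real) ^ k * s) powr (-a)"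
        unfolding c_def by (simp add: powr_add[symmetric])
      also have "\<dots> = 2 ^ DIM('a) * s powr (-a) * (2 powr (-a)) ^ k"
        using s by (simp add: powr_mult pow2_powr_k)
      finally show ?thesis by (simp add: algebra_simps)
    qed
    show "(\<lambda>k. c k * (unit_ball_vol (DIM('a)) * R k ^ DIM('a))) sums (KF DIM('a) a * s powr (-a))"
      unfolding eq KF_def
      using sums_mult[OF geometric_sums[of "2 powr (-a)"], of "unit_ball_vol (DIM('a)) * 2 ^ DIM('a) * s powr (-a)"] q1
      by (simp add: field_simps)
  qed
qed

lemma near_int:
  fixes s q :: real
  assumes s: "0 < s" and q: "0 < q" "q \<le> real DIM('a)"
  shows "(\<integral>\<^sup>+ z. ennreal (indicator {z::'a::euclidean_space. norm z \<le> s} z * norm z powr (q - real DIM('a))) \<partial>lborel)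
     \<le> ennreal (KN DIM('a) q * s powr q)"
proof -
  define d where "d = DIM('a)"
  define c where "c k = (s / 2 ^ Suc k) powr (q - real d)" for k :: nat
  define R where "R k = s / (2::real) ^ k" for k :: nat
  have q1: "2 powr (-q) < (1::real)" using q by (simp add: powr_less_one)
  show ?thesis
  proof (rule shell_sum[where c = c and R = R])
    fix z :: 'a
    show "ennreal (indicator {z. norm z \<le> s} z * norm z powr (q - real DIM('a)))
          \<le> (\<Sum>k. ennreal (c k) * indicator (cball 0 (R k)) z)"
    proof (cases "norm z \<le> s \<and> z \<noteq> 0")
      case True
      then have "1 \<le> s / norm z" using s by simp
      then obtain k where k: "2 ^ k \<le> s / norm z" "s / norm z < 2 ^ Suc k"
        using exists_dyadic by blast
      have nz: "0 < norm z" using True by simp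
      have k1: "s / 2 ^ Suc k \<le> norm z"
      proof -
        have "s < 2 ^ Suc k * norm z" using k(2) nz by (simp add: divide_less_eq)
        then show ?thesis by (simp add: divide_le_eq mult.commute)
      qed
      have k2: "norm z \<le> R k"
      proof -
        have "2 ^ k * norm z \<le> s" using k(1) nz by (simp add: le_divide_eq)
        then show ?thesis unfolding R_def by (simp add: le_divide_eq mult.commute)
      qed
      have ck: "norm z powr (q - real DIM('a)) \<le> c k"
        unfolding c_def d_def using k1 s q by (intro powr_mono2') auto
      have "ennreal (indicator {z. norm z \<le> s} z * norm z powr (q - real DIM('a)))
          \<le> ennreal (c k) * indicator (cball 0 (R k)) z"
      proof -
        have i1: "indicator {z. norm z \<le> s} z = (1::real)" using True by simp
        have i2: "indicator (cball (0::'a) (R k)) z = (1::ennreal)" using k2 by simp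
        show ?thesis unfolding i1 i2 using ennreal_leI[OF ck] by simp
      qed
      also have "\<dots> \<le> (\<Sum>k. ennreal (c k) * indicator (cball 0 (R k)) z)"
        by (rule le_suminf_ennreal)
      finally show ?thesis .
    qed (auto simp add: indicator_def)
  next
    show "\<And>k. 0 \<le> c k" by (simp add: c_def)
    show "\<And>k. 0 \<le> R k" using s by (simp add: R_def)
    have eq: "c k * (unit_ball_vol (DIM('a)) * R k ^ DIM('a))
        = (unit_ball_vol (DIM('a)) * 2 powr (real DIM('a) - q) * s powr q) * (2 powr (-q)) ^ k" for k
    proof -
      define u where "u = s / (2::real) ^ k"
      have p: "0 < u" using s by (simp add: u_def)
      have "R k ^ DIM('a) = u powr real d"
        using p by (simp add: R_def d_def powr_realpow u_def)
      moreover have "c k = u powr (q - real d) * 2 powr (real d - q)"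
      proof -
        have "s / 2 ^ Suc k = u / 2" by (simp add: u_def)
        then have "c k = (u / 2) powr (q - real d)"
          unfolding c_def by (rule arg_cong)
        then have "c k = u powr (q - real d) / 2 powr (q - real d)"
          using p by (simp only: powr_divide)
        moreover have "2 powr (real d - q) = inverse (2 powr (q - real d))"
          by (simp add: powr_minus[symmetric])
        ultimately show ?thesis by (simp add: divide_inverse)
      qed
      ultimately have "c k * R k ^ DIM('a) = 2 powr (real d - q) * (u powr (q - real d) * u powr real d)"
        by (simp only: mult_ac)
      also have "u powr (q - real d) * u powr real d = u powr q"
        by (simp add: powr_add[symmetric])
      also have "u powr q = s powr q * (2 powr (-q)) ^ k"
      proof -
        have "u powr q = s powr q / ((2::real) ^ k) powr q"
          unfolding u_def using s by (simp add: powr_divide)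
        also have "\<dots> = s powr q * ((2::real) ^ k) powr (-q)"
          by (simp add: powr_minus divide_inverse)
        finally show ?thesis by (simp add: pow2_powr_k)
      qed
      finally show ?thesis by (simp add: algebra_simps d_def)
    qed
    show "(\<lambda>k. c k * (unit_ball_vol (DIM('a)) * R k ^ DIM('a))) sums (KN DIM('a) q * s powr q)"
      unfolding eq KN_def
      using sums_mult[OF geometric_sums[of "2 powr (-q)"], of "unit_ball_vol (DIM('a)) * 2 powr (real DIM('a) - q) * s powr q"] q1
      by (simp add: field_simps)
  qed
qed



lemma combine2:
  fixes F ga gb :: "'b \<Rightarrow> real"
  assumes le: "\<And>z. F z \<le> ca * ga z + cb * gb z"
    and ga: "\<And>z. 0 \<le> ga z" and gb: "\<And>z. 0 \<le> gb z" and ca: "0 \<le> ca" and cb: "0 \<le> cb"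
    and m1: "ga \<in> borel_measurable M" and m2: "gb \<in> borel_measurable M"
    and I1: "(\<integral>\<^sup>+ z. ennreal (ga z) \<partial>M) \<le> ennreal B1"
    and I2: "(\<integral>\<^sup>+ z. ennreal (gb z) \<partial>M) \<le> ennreal B2"
    and B1: "0 \<le> B1" and B2: "0 \<le> B2"
  shows "(\<integral>\<^sup>+ z. ennreal (F z) \<partial>M) \<le> ennreal (ca * B1 + cb * B2)"
proof -
  have "(\<integral>\<^sup>+ z. ennreal (F z) \<partial>M) \<le> (\<integral>\<^sup>+ z. (ennreal ca * ennreal (ga z) + ennreal cb * ennreal (gb z)) \<partial>M)"
  proof (rule nn_integral_mono)
    fix z
    have "ennreal (F z) \<le> ennreal (ca * ga z + cb * gb z)" using le by (rule ennreal_leI)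
    also have "\<dots> = ennreal ca * ennreal (ga z) + ennreal cb * ennreal (gb z)"
      using ga[of z] gb[of z] ca cb by (simp add: ennreal_plus ennreal_mult)
    finally show "ennreal (F z) \<le> ennreal ca * ennreal (ga z) + ennreal cb * ennreal (gb z)" .
  qed
  also have "\<dots> = ennreal ca * (\<integral>\<^sup>+ z. ennreal (ga z) \<partial>M) + ennreal cb * (\<integral>\<^sup>+ z. ennreal (gb z) \<partial>M)"
    using m1 m2 by (simp add: nn_integral_add nn_integral_cmult)
  also have "\<dots> \<le> ennreal ca * ennreal B1 + ennreal cb * ennreal B2"
    by (intro add_mono mult_left_mono I1 I2) auto
  also have "\<dots> = ennreal (ca * B1 + cb * B2)"
    using ca cb B1 B2 by (simp add: ennreal_plus ennreal_mult)
  finally show ?thesis .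
qed

lemma KF_pos: "0 < a \<Longrightarrow> 0 < KF d a"
  unfolding KF_def using powr_less_one[of 2 "-a"] by (intro divide_pos_pos mult_pos_pos) auto

lemma KN_pos: "0 < q \<Longrightarrow> 0 < KN d q"
  unfolding KN_def using powr_less_one[of 2 "-q"] by (intro divide_pos_pos mult_pos_pos) auto

lemma nn_translate:
  fixes g :: "'a::euclidean_space \<Rightarrow> real"
  assumes "g \<in> borel_measurable borel"
  shows "(\<integral>\<^sup>+ z. ennreal (g (x + z)) \<partial>lborel) = (\<integral>\<^sup>+ y. ennreal (g y) \<partial>lborel)"
proof -
  have "(\<integral>\<^sup>+ y. ennreal (g y) \<partial>lborel) = (\<integral>\<^sup>+ y. ennreal (g y) \<partial>(distr lborel borel ((+) x)))"
    by (simp add: lborel_distr_plus)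
  also have "\<dots> = (\<integral>\<^sup>+ z. ennreal (g (x + z)) \<partial>lborel)"
    by (rule nn_integral_distr) (use assms in measurable)
  finally show ?thesis by simp
qed

lemma E_int:
  fixes s \<alpha> :: real
  assumes s: "0 < s" and a: "0 < \<alpha>"
  shows "(\<integral>\<^sup>+ y. ennreal ((norm y + s) powr (- real DIM('a) - \<alpha>)) \<partial>(lborel :: 'a::euclidean_space measure))
     \<le> ennreal ((unit_ball_vol (DIM('a)) + KF DIM('a) \<alpha>) * s powr (-\<alpha>))"
proof -
  define m where "m = - real DIM('a) - \<alpha>"
  have m: "m \<le> 0" using a by (simp add: m_def)
  have "(\<integral>\<^sup>+ y. ennreal ((norm y + s) powr m) \<partial>(lborel :: 'a measure))
      \<le> ennreal (1 * (unit_ball_vol (DIM('a)) * s powr (-\<alpha>)) + 1 * (KF DIM('a) \<alpha> * s powr (-\<alpha>)))"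
  proof (rule combine2[where ga = "\<lambda>y. indicator {y. norm y \<le> s} y * s powr m"
        and gb = "\<lambda>y. indicator {y. s < norm y} y * norm y powr m"])
    fix y :: 'a
    show "(norm y + s) powr m \<le> 1 * (indicator {y. norm y \<le> s} y * s powr m) + 1 * (indicator {y. s < norm y} y * norm y powr m)"
    proof (cases "norm y \<le> s")
      case True
      have "(norm y + s) powr m \<le> s powr m" using s m by (intro powr_mono2') auto
      then show ?thesis using True by simp
    next
      case False
      have "(norm y + s) powr m \<le> norm y powr m" using s m False by (intro powr_mono2') auto
      then show ?thesis using False by simp
    qed
  next
    have cb: "{y::'a. norm y \<le> s} = cball 0 s" by (auto simp: cball_def dist_norm)
    have "(\<integral>\<^sup>+ y. ennreal (indicator {y::'a. norm y \<le> s} y * s powr m) \<partial>lborel)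
        = (\<integral>\<^sup>+ y. ennreal (s powr m) * indicator (cball (0::'a) s) y \<partial>lborel)"
      unfolding cb by (intro nn_integral_cong) (auto simp: indicator_def)
    also have "\<dots> = ennreal (s powr m) * ennreal (unit_ball_vol (DIM('a)) * s ^ DIM('a))"
      using s by (simp add: nn_integral_cmult_indicator emeasure_cball)
    also have "\<dots> = ennreal (unit_ball_vol (DIM('a)) * s powr (-\<alpha>))"
    proof -
      have "s powr m * s ^ DIM('a) = s powr (-\<alpha>)"
        using s by (simp add: m_def powr_realpow[symmetric] powr_add[symmetric])
      then show ?thesis using s
        by (simp add: ennreal_mult[symmetric] mult_ac)
    qed
    finally show "(\<integral>\<^sup>+ y. ennreal (indicator {y::'a. norm y \<le> s} y * s powr m) \<partial>lborel)
        \<le> ennreal (unit_ball_vol (DIM('a)) * s powr (-\<alpha>))" by simp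
  next
    show "(\<integral>\<^sup>+ y. ennreal (indicator {y::'a. s < norm y} y * norm y powr m) \<partial>lborel)
        \<le> ennreal (KF DIM('a) \<alpha> * s powr (-\<alpha>))"
      unfolding m_def using far_int[OF s a] by simp
  qed (use s a KF_pos[OF a, of "DIM('a)"] in \<open>auto\<close>)
  then show ?thesis by (simp add: m_def algebra_simps)
qed



lemma powr_div_helper: "0 < (c::real) \<Longrightarrow> 0 < u \<Longrightarrow> (u / c) powr m = c powr (-m) * u powr m"
  by (subst powr_divide) (auto simp: powr_minus divide_inverse mult.commute)

definition K4 :: "nat \<Rightarrow> real \<Rightarrow> real" where
  "K4 d a = 2 powr (real d + a) * KF d a + 4 powr (real d + a) * (unit_ball_vol (real d) + KF d a)"

lemma conv_int:
  fixes s \<alpha> :: real and x :: "'a::euclidean_space"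
  assumes s: "0 < s" and a: "0 < \<alpha>"
  shows "(\<integral>\<^sup>+ z. ennreal (indicator {z. s < norm z} z * ((norm (x + z) + s) powr (- real DIM('a) - \<alpha>) * norm z powr (- real DIM('a) - \<alpha>))) \<partial>lborel)
     \<le> ennreal (K4 DIM('a) \<alpha> * s powr (-\<alpha>) * (norm x + s) powr (- real DIM('a) - \<alpha>))"
proof -
  define m where "m = - real DIM('a) - \<alpha>"
  have m: "m \<le> 0" using a by (simp add: m_def)
  define Ex where "Ex = (norm x + s) powr m"
  have Ex: "0 \<le> Ex" by (simp add: Ex_def)
  have KF: "0 < KF DIM('a) \<alpha>" using KF_pos[OF a] .
  have "(\<integral>\<^sup>+ z. ennreal (indicator {z. s < norm z} z * ((norm (x + z) + s) powr m * norm z powr m)) \<partial>lborel)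
     \<le> ennreal ((2 powr (-m) * Ex) * (KF DIM('a) \<alpha> * s powr (-\<alpha>))
          + (4 powr (-m) * Ex) * ((unit_ball_vol (DIM('a)) + KF DIM('a) \<alpha>) * s powr (-\<alpha>)))"
  proof (rule combine2[where ga = "\<lambda>z. indicator {z. s < norm z} z * norm z powr m"
        and gb = "\<lambda>z. (norm (x + z) + s) powr m"])
    fix z :: 'a
    show "indicator {z. s < norm z} z * ((norm (x + z) + s) powr m * norm z powr m)
      \<le> (2 powr (-m) * Ex) * (indicator {z. s < norm z} z * norm z powr m)
         + (4 powr (-m) * Ex) * (norm (x + z) + s) powr m"
    proof (cases "s < norm z")
      case False
      then show ?thesis using Ex by simp
    next
      case True
      have nz: "0 < norm z" using True s by linarith
      show ?thesis
      proof (cases "norm x / 2 \<le> norm (x + z)")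
        case True2: True
        have "(norm (x + z) + s) powr m \<le> ((norm x + s) / 2) powr m"
          using s m True2 by (intro powr_mono2') (auto simp: add_nonneg_pos)
        also have "\<dots> = 2 powr (-m) * Ex"
          unfolding Ex_def using s by (intro powr_div_helper) (auto simp: add_nonneg_pos)
        finally have "(norm (x + z) + s) powr m * norm z powr m \<le> (2 powr (-m) * Ex) * norm z powr m"
          by (intro mult_right_mono) auto
        moreover have "0 \<le> (4 powr (-m) * Ex) * (norm (x + z) + s) powr m" using Ex by simp
        ultimately show ?thesis using True by simp
      next
        case False2: False
        have "norm x \<le> norm (x + z) + norm z"
          using norm_triangle_ineq4[of "x + z" z] by simp
        then have "norm x < 2 * norm z" using False2 by linarith
        then have "norm x + s \<le> 4 * norm z" using True norm_ge_zero[of z] by linarith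
        then have "(norm x + s) / 4 \<le> norm z" by simp
        then have "norm z powr m \<le> ((norm x + s) / 4) powr m"
          using s m by (intro powr_mono2') (auto simp: add_nonneg_pos)
        also have "\<dots> = 4 powr (-m) * Ex"
          unfolding Ex_def using s by (intro powr_div_helper) (auto simp: add_nonneg_pos)
        finally have "(norm (x + z) + s) powr m * norm z powr m \<le> (norm (x + z) + s) powr m * (4 powr (-m) * Ex)"
          by (intro mult_left_mono) auto
        moreover have "0 \<le> (2 powr (-m) * Ex) * (indicator {z. s < norm z} z * norm z powr m)" using Ex by simp
        ultimately show ?thesis using True by (simp add: mult_ac)
      qed
    qed
  next
    show "(\<integral>\<^sup>+ z. ennreal (indicator {z::'a. s < norm z} z * norm z powr m) \<partial>lborel) \<le> ennreal (KF DIM('a) \<alpha> * s powr (-\<alpha>))"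
      unfolding m_def using far_int[OF s a, where 'a='a] by simp
  next
    have "(\<integral>\<^sup>+ z. ennreal ((norm (x + z) + s) powr m) \<partial>lborel) = (\<integral>\<^sup>+ y. ennreal ((norm y + s) powr m) \<partial>(lborel::'a measure))"
      by (rule nn_translate[where g = "\<lambda>y. (norm y + s) powr m"]) measurable
    also have "\<dots> \<le> ennreal ((unit_ball_vol (DIM('a)) + KF DIM('a) \<alpha>) * s powr (-\<alpha>))"
      unfolding m_def by (rule E_int[OF s a])
    finally show "(\<integral>\<^sup>+ z. ennreal ((norm (x + z) + s) powr m) \<partial>lborel) \<le> ennreal ((unit_ball_vol (DIM('a)) + KF DIM('a) \<alpha>) * s powr (-\<alpha>))" .
  qed (use s a Ex KF in \<open>auto intro!: add_nonneg_nonneg\<close>)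
  also have "(2 powr (-m) * Ex) * (KF DIM('a) \<alpha> * s powr (-\<alpha>))
          + (4 powr (-m) * Ex) * ((unit_ball_vol (DIM('a)) + KF DIM('a) \<alpha>) * s powr (-\<alpha>))
        = K4 DIM('a) \<alpha> * s powr (-\<alpha>) * Ex"
    unfolding K4_def m_def by (simp add: algebra_simps)
  finally show ?thesis unfolding m_def Ex_def .
qed



lemma interp_min:
  fixes a p q \<gamma> :: real
  assumes "a \<le> p" "a \<le> q" "0 \<le> p" "0 \<le> q" "0 \<le> \<gamma>" "\<gamma> \<le> 1"
  shows "a \<le> p powr \<gamma> * q powr (1 - \<gamma>)"
proof (cases "p \<le> q")
  case True
  show ?thesis
  proof (cases "p = 0")
    case True then show ?thesis using assms by simp
  next
    case False
    then have pp: "0 < p" using assms by simp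
    have "p = p powr \<gamma> * p powr (1 - \<gamma>)" using pp by (simp add: powr_add[symmetric])
    also have "\<dots> \<le> p powr \<gamma> * q powr (1 - \<gamma>)"
      using True assms by (intro mult_left_mono powr_mono2) auto
    finally show ?thesis using assms by simp
  qed
next
  case False
  show ?thesis
  proof (cases "q = 0")
    case True then show ?thesis using assms by simp
  next
    case False2: False
    then have qq: "0 < q" using assms by simp
    have "q = q powr \<gamma> * q powr (1 - \<gamma>)" using qq by (simp add: powr_add[symmetric])
    also have "\<dots> \<le> p powr \<gamma> * q powr (1 - \<gamma>)"
      using False assms by (intro mult_right_mono powr_mono2) auto
    finally show ?thesis using assms by simp
  qed
qed

lemma E_seg:
  fixes x y :: "'a::euclidean_space"
  assumes s: "0 < s" and m: "m \<le> 0" and xy: "norm (y - x) \<le> s"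
  shows "(norm y + s) powr m \<le> 2 powr (-m) * (norm x + s) powr m"
proof -
  have "norm x \<le> norm y + norm (y - x)" using norm_triangle_ineq4[of y "y - x"] by simp
  then have "norm x + s \<le> 2 * norm y + 2 * s" using xy s norm_ge_zero[of y] by linarith
  then have "(norm x + s) / 2 \<le> norm y + s" by simp
  then have "(norm y + s) powr m \<le> ((norm x + s) / 2) powr m"
    using s m by (intro powr_mono2') (auto simp: add_nonneg_pos)
  also have "\<dots> = 2 powr (-m) * (norm x + s) powr m"
    using s by (intro powr_div_helper) (auto simp: add_nonneg_pos)
  finally show ?thesis .
qed



lemma pw_bound:
  fixes f :: "'a::euclidean_space \<Rightarrow> real" and Df :: "'a \<Rightarrow> ('a \<Rightarrow>\<^sub>L real)"
    and D2 :: "'a \<Rightarrow> ('a \<Rightarrow>\<^sub>L ('a \<Rightarrow>\<^sub>L real))" and E :: "'a \<Rightarrow> real"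
  assumes s: "0 < s" and a: "0 < \<alpha>" and g: "0 \<le> \<gamma>" "\<gamma> \<le> 1"
    and df: "\<And>y. (f has_derivative blinfun_apply (Df y)) (at y)"
    and d2: "\<And>y. (Df has_derivative blinfun_apply (D2 y)) (at y)"
    and A: "0 \<le> A0" "0 \<le> A1" "0 \<le> A2"
    and b0: "\<And>y. \<bar>f y\<bar> \<le> A0 * E y" and b1: "\<And>y. norm (Df y) \<le> A1 * E y"
    and b2: "\<And>y. norm (D2 y) \<le> A2 * E y"
    and E: "\<And>y. E y = (norm y + s) powr (- real DIM('a) - \<alpha>)"
  shows "\<bar>f (x + z) - f x - blinfun_apply (Df x)
            (if \<alpha> < 1 then 0 else if \<alpha> = 1 then (if norm z \<le> s then z else 0) else z)\<bar>
     \<le> indicator {z. norm z \<le> s} z *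
          (if \<alpha> < 1 then norm z * (A1 * (2 powr (real DIM('a) + \<alpha>)) * E x)
           else norm z powr (2 - \<gamma>) * ((2 * A1 * (2 powr (real DIM('a) + \<alpha>)) * E x) powr \<gamma>
                  * (A2 * (2 powr (real DIM('a) + \<alpha>)) * E x) powr (1 - \<gamma>)))
       + indicator {z. s < norm z} z * (A0 * E (x + z) + A0 * E x + (if 1 < \<alpha> then A1 * E x * norm z else 0))"
  (is "\<bar>?L\<bar> \<le> ?R")
proof -
  define P where "P = 2 powr (real DIM('a) + \<alpha>)"
  have P1: "1 \<le> P" unfolding P_def using a by (intro ge_one_powr_ge_zero) auto
  have Epos: "\<And>y. 0 \<le> E y" using E by simp
  have Eseg: "E y \<le> P * E x" if "norm (y - x) \<le> s" for y
    using E_seg[OF s _ that, of "- real DIM('a) - \<alpha>"] a unfolding E P_def by (simp add: add.commute)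
  show ?thesis
  proof (cases "norm z \<le> s")
    case near: True
    have Rn: "?R = (if \<alpha> < 1 then norm z * (A1 * P * E x)
           else norm z powr (2 - \<gamma>) * ((2 * A1 * P * E x) powr \<gamma> * (A2 * P * E x) powr (1 - \<gamma>)))"
      using near s unfolding P_def by simp
    show ?thesis
    proof (cases "z = 0")
      case True
      have R0: "0 \<le> ?R" using A Epos s by (auto intro!: add_nonneg_nonneg mult_nonneg_nonneg)
      have L0: "?L = 0" using True by (simp add: blinfun.zero_right)
      show ?thesis unfolding L0 abs_zero by (rule R0)
    next
      case znz: False
      define S where "S = closed_segment x (x + z)"
      have Sin: "norm (y - x) \<le> norm z" if "y \<in> S" for y
        using that dist_in_closed_segment[of y x "x + z"] unfolding S_def
        by (simp add: dist_norm norm_minus_commute)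
      have xS: "x \<in> S" "x + z \<in> S" unfolding S_def by auto
      have ESeg: "E y \<le> P * E x" if "y \<in> S" for y
        using Sin[OF that] near by (intro Eseg) simp
      show ?thesis
      proof (cases "\<alpha> < 1")
        case True
        have "norm (f (x + z) - f x) \<le> (A1 * P * E x) * norm ((x + z) - x)"
        proof (rule differentiable_bound[where S = S and f' = "\<lambda>y. blinfun_apply (Df y)"])
          show "convex S" unfolding S_def by simp
          show "(f has_derivative blinfun_apply (Df y)) (at y within S)" for y
            using df[of y] by (rule has_derivative_at_withinI)
          show "onorm (blinfun_apply (Df y)) \<le> A1 * P * E x" if "y \<in> S" for y
          proof -
            have "onorm (blinfun_apply (Df y)) = norm (Df y)" by (simp add: norm_blinfun.rep_eq)
            also have "\<dots> \<le> A1 * E y" by (rule b1)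
            also have "\<dots> \<le> A1 * (P * E x)" using ESeg[OF that] A by (intro mult_left_mono) auto
            finally show ?thesis by (simp add: mult_ac)
          qed
        qed (use xS in auto)
        then show ?thesis using True Rn by (simp add: mult_ac)
      next
        case False
        have wz: "(if \<alpha> < 1 then 0 else if \<alpha> = 1 then (if norm z \<le> s then z else 0) else z) = z"
          using False near by auto
        define B where "B = (2 * A1 * P * E x) powr \<gamma> * (A2 * P * E x * norm z) powr (1 - \<gamma>)"
        have DB: "norm (Df y - Df x) \<le> B" if "y \<in> S" for y
        proof (unfold B_def, rule interp_min)
          have "norm (Df y - Df x) \<le> norm (Df y) + norm (Df x)" by (rule norm_triangle_ineq4)
          also have "\<dots> \<le> A1 * (P * E x) + A1 * E x"
            using b1[of y] b1[of x] ESeg[OF that] A by (meson add_mono mult_left_mono order_trans)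
          also have "\<dots> \<le> 2 * A1 * P * E x"
            proof -
            have "E x \<le> P * E x" using P1 Epos[of x] by (simp add: mult_le_cancel_right1)
            then have "A1 * E x \<le> A1 * (P * E x)" using A by (intro mult_left_mono) auto
            then show ?thesis by (simp add: algebra_simps)
          qed
          finally show "norm (Df y - Df x) \<le> 2 * A1 * P * E x" .
          have "norm (Df y - Df x) \<le> (A2 * P * E x) * norm (y - x)"
          proof (rule differentiable_bound[where S = S and f' = "\<lambda>y. blinfun_apply (D2 y)"])
            show "convex S" unfolding S_def by simp
            show "(Df has_derivative blinfun_apply (D2 u)) (at u within S)" for u
              using d2[of u] by (rule has_derivative_at_withinI)
            show "onorm (blinfun_apply (D2 u)) \<le> A2 * P * E x" if "u \<in> S" for u
            proof -
              have "onorm (blinfun_apply (D2 u)) = norm (D2 u)" by (simp add: norm_blinfun.rep_eq)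
              also have "\<dots> \<le> A2 * E u" by (rule b2)
              also have "\<dots> \<le> A2 * (P * E x)" using ESeg[OF that] A by (intro mult_left_mono) auto
              finally show ?thesis by (simp add: mult_ac)
            qed
          qed (use xS that in auto)
          also have "\<dots> \<le> (A2 * P * E x) * norm z"
            using Sin[OF that] A P1 Epos[of x] by (intro mult_left_mono) auto
          finally show "norm (Df y - Df x) \<le> A2 * P * E x * norm z" .
        qed (use A P1 Epos g in auto)
        have "norm ((f (x + z) - blinfun_apply (Df x) (x + z)) - (f x - blinfun_apply (Df x) x)) \<le> B * norm ((x + z) - x)"
        proof (rule differentiable_bound[where S = S and f' = "\<lambda>y. blinfun_apply (Df y - Df x)"])
          show "convex S" unfolding S_def by simp
          show "((\<lambda>y. f y - blinfun_apply (Df x) y) has_derivative blinfun_apply (Df y - Df x)) (at y within S)" for y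
          proof -
            have "((\<lambda>y. f y - blinfun_apply (Df x) y) has_derivative (\<lambda>h. blinfun_apply (Df y) h - blinfun_apply (Df x) h)) (at y)"
              by (intro has_derivative_diff df bounded_linear_imp_has_derivative blinfun.bounded_linear_right)
            moreover have "blinfun_apply (Df y - Df x) = (\<lambda>h. blinfun_apply (Df y) h - blinfun_apply (Df x) h)"
              by (simp add: fun_eq_iff blinfun.diff_left)
            ultimately show ?thesis by (simp add: has_derivative_at_withinI)
          qed
          show "onorm (blinfun_apply (Df y - Df x)) \<le> B" if "y \<in> S" for y
            using DB[OF that] by (simp add: norm_blinfun.rep_eq)
        qed (use xS in auto)
        then have L: "\<bar>?L\<bar> \<le> B * norm z" unfolding wz by (simp add: blinfun.add_right algebra_simps)
        have nzp: "0 < norm z" using znz by simp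
        have "B * norm z = norm z powr (2 - \<gamma>) * ((2 * A1 * P * E x) powr \<gamma> * (A2 * P * E x) powr (1 - \<gamma>))"
        proof -
          have "(A2 * P * E x * norm z) powr (1 - \<gamma>) = (A2 * P * E x) powr (1 - \<gamma>) * norm z powr (1 - \<gamma>)"
            using A P1 Epos[of x] by (simp add: powr_mult)
          moreover have "norm z powr (1 - \<gamma>) * norm z = norm z powr (2 - \<gamma>)"
          proof -
            have "norm z powr (1 - \<gamma>) * norm z = norm z powr (1 - \<gamma>) * norm z powr 1" using nzp by simp
            also have "\<dots> = norm z powr ((1 - \<gamma>) + 1)" by (rule powr_add[symmetric])
            finally show ?thesis by simp
          qed
          ultimately show ?thesis unfolding B_def by (simp add: mult_ac)
        qed
        then show ?thesis using L Rn False by simp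
      qed
    qed
  next
    case far: False
    have Rf: "?R = A0 * E (x + z) + A0 * E x + (if 1 < \<alpha> then A1 * E x * norm z else 0)"
      using far by simp
    have t1: "\<bar>f (x + z)\<bar> \<le> A0 * E (x + z)" by (rule b0)
    have t2: "\<bar>f x\<bar> \<le> A0 * E x" by (rule b0)
    have t3: "\<bar>blinfun_apply (Df x) (if \<alpha> < 1 then 0 else if \<alpha> = 1 then (if norm z \<le> s then z else 0) else z)\<bar>
        \<le> (if 1 < \<alpha> then A1 * E x * norm z else 0)"
    proof (cases "1 < \<alpha>")
      case True
      have "\<bar>blinfun_apply (Df x) z\<bar> \<le> norm (Df x) * norm z" using norm_blinfun[of "Df x" z] by simp
      also have "\<dots> \<le> A1 * E x * norm z" using b1[of x] by (intro mult_right_mono) auto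
      finally show ?thesis using True by simp
    next
      case False
      then show ?thesis using far by auto
    qed
    have "\<bar>?L\<bar> \<le> \<bar>f (x + z)\<bar> + \<bar>f x\<bar> + \<bar>blinfun_apply (Df x) (if \<alpha> < 1 then 0 else if \<alpha> = 1 then (if norm z \<le> s then z else 0) else z)\<bar>"
      by linarith
    then show ?thesis using t1 t2 t3 Rf by linarith
  qed
qed



lemma mult_powr_one: "(r::real) \<ge> 0 \<Longrightarrow> r * r powr m = r powr (m + 1)"
  by (cases "r = 0") (simp_all add: powr_add)

lemma near_piece:
  fixes s q c :: real
  assumes s: "0 < s" and q: "0 < q" "q \<le> real DIM('a)" and c: "0 \<le> c"
  shows "(\<integral>\<^sup>+ z. ennreal (indicator {z::'a::euclidean_space. norm z \<le> s} z * (c * norm z powr (q - real DIM('a)))) \<partial>lborel)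
      \<le> ennreal (c * (KN DIM('a) q * s powr q))"
proof -
  have "(\<integral>\<^sup>+ z. ennreal (indicator {z::'a. norm z \<le> s} z * (c * norm z powr (q - real DIM('a)))) \<partial>lborel)
      = (\<integral>\<^sup>+ z. ennreal c * ennreal (indicator {z::'a. norm z \<le> s} z * norm z powr (q - real DIM('a))) \<partial>lborel)"
    using c by (intro nn_integral_cong) (simp add: ennreal_mult[symmetric] mult_ac)
  also have "\<dots> = ennreal c * (\<integral>\<^sup>+ z. ennreal (indicator {z::'a. norm z \<le> s} z * norm z powr (q - real DIM('a))) \<partial>lborel)"
    by (rule nn_integral_cmult) measurable
  also have "\<dots> \<le> ennreal c * ennreal (KN DIM('a) q * s powr q)"
    by (intro mult_left_mono near_int[OF s q]) auto
  also have "\<dots> = ennreal (c * (KN DIM('a) q * s powr q))"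
    using c KN_pos[OF q(1), of "DIM('a)"] s by (subst ennreal_mult) auto
  finally show ?thesis .
qed



lemma cN_eq:
  fixes P Ex A1 A2 \<gamma> :: real
  assumes "0 < P" "0 < Ex" "0 \<le> A1" "0 \<le> A2"
  shows "(2 * A1 * P * Ex) powr \<gamma> * (A2 * P * Ex) powr (1 - \<gamma>) = 2 powr \<gamma> * P * Ex * (A1 powr \<gamma> * A2 powr (1 - \<gamma>))"
proof -
  have e1: "(2 * A1 * P * Ex) powr \<gamma> = 2 powr \<gamma> * A1 powr \<gamma> * P powr \<gamma> * Ex powr \<gamma>"
    using assms by (simp add: powr_mult)
  have e2: "(A2 * P * Ex) powr (1 - \<gamma>) = A2 powr (1 - \<gamma>) * P powr (1 - \<gamma>) * Ex powr (1 - \<gamma>)"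
    using assms by (simp add: powr_mult)
  have e3: "P powr \<gamma> * P powr (1 - \<gamma>) = P" using assms by (simp add: powr_add[symmetric])
  have e4: "Ex powr \<gamma> * Ex powr (1 - \<gamma>) = Ex" using assms by (simp add: powr_add[symmetric])
  have "(2 * A1 * P * Ex) powr \<gamma> * (A2 * P * Ex) powr (1 - \<gamma>)
     = 2 powr \<gamma> * (P powr \<gamma> * P powr (1 - \<gamma>)) * (Ex powr \<gamma> * Ex powr (1 - \<gamma>)) * (A1 powr \<gamma> * A2 powr (1 - \<gamma>))"
    unfolding e1 e2 by (simp only: mult_ac)
  then show ?thesis unfolding e3 e4 .
qed

lemma combine4:
  fixes F g1 g2 g3 g4 :: "'b \<Rightarrow> real"
  assumes le: "\<And>z. F z \<le> ca * g1 z + cb * g2 z + cc * g3 z + cd * g4 z"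
    and g: "\<And>z. 0 \<le> g1 z" "\<And>z. 0 \<le> g2 z" "\<And>z. 0 \<le> g3 z" "\<And>z. 0 \<le> g4 z"
    and c: "0 \<le> ca" "0 \<le> cb" "0 \<le> cc" "0 \<le> cd"
    and m: "g1 \<in> borel_measurable M" "g2 \<in> borel_measurable M" "g3 \<in> borel_measurable M" "g4 \<in> borel_measurable M"
    and I1: "(\<integral>\<^sup>+ z. ennreal (g1 z) \<partial>M) \<le> ennreal B1"
    and I2: "(\<integral>\<^sup>+ z. ennreal (g2 z) \<partial>M) \<le> ennreal B2"
    and I3: "(\<integral>\<^sup>+ z. ennreal (g3 z) \<partial>M) \<le> ennreal B3"
    and I4: "(\<integral>\<^sup>+ z. ennreal (g4 z) \<partial>M) \<le> ennreal B4"
    and B: "0 \<le> B1" "0 \<le> B2" "0 \<le> B3" "0 \<le> B4"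
  shows "(\<integral>\<^sup>+ z. ennreal (F z) \<partial>M) \<le> ennreal (ca * B1 + cb * B2 + cc * B3 + cd * B4)"
proof -
  have J12: "(\<integral>\<^sup>+ z. ennreal (ca * g1 z + cb * g2 z) \<partial>M) \<le> ennreal (ca * B1 + cb * B2)"
    by (rule combine2[where ga = g1 and gb = g2]) (use g c m I1 I2 B in auto)
  have J34: "(\<integral>\<^sup>+ z. ennreal (cc * g3 z + cd * g4 z) \<partial>M) \<le> ennreal (cc * B3 + cd * B4)"
    by (rule combine2[where ga = g3 and gb = g4]) (use g c m I3 I4 B in auto)
  have "(\<integral>\<^sup>+ z. ennreal (F z) \<partial>M) \<le> ennreal (1 * (ca * B1 + cb * B2) + 1 * (cc * B3 + cd * B4))"
    by (rule combine2[where ga = "\<lambda>z. ca * g1 z + cb * g2 z" and gb = "\<lambda>z. cc * g3 z + cd * g4 z"])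
       (use le g c m J12 J34 B in \<open>auto simp: add_ac intro!: add_nonneg_nonneg mult_nonneg_nonneg\<close>)
  then show ?thesis by (simp add: add_ac)
qed

definition K0c :: "nat \<Rightarrow> real \<Rightarrow> real" where "K0c d a = K4 d a + KF d a"
definition K1c :: "nat \<Rightarrow> real \<Rightarrow> real" where
  "K1c d a = (if a < 1 then 2 powr (real d + a) * KN d (1 - a) else 0) + (if 1 < a then KF d (a - 1) else 0)"
definition K2c :: "nat \<Rightarrow> real \<Rightarrow> real \<Rightarrow> real" where
  "K2c d a g = 2 * 2 powr (real d + a) * KN d (2 - g - a)"



lemma int_bound:
  fixes x :: "'a::euclidean_space" and s \<alpha> \<gamma> A0 A1 A2 :: real and E :: "'a \<Rightarrow> real"
  assumes s: "0 < s" and a: "0 < \<alpha>" "\<alpha> < 2" and g: "0 \<le> \<gamma>" "\<gamma> < min (2 - \<alpha>) 1"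
    and dim: "2 \<le> DIM('a)"
    and A: "0 \<le> A0" "0 \<le> A1" "0 \<le> A2"
    and E: "\<And>y. E y = (norm y + s) powr (- real DIM('a) - \<alpha>)"
  shows "(\<integral>\<^sup>+ z. ennreal ((indicator {z. norm z \<le> s} z *
          (if \<alpha> < 1 then norm z * (A1 * (2 powr (real DIM('a) + \<alpha>)) * E x)
           else norm z powr (2 - \<gamma>) * ((2 * A1 * (2 powr (real DIM('a) + \<alpha>)) * E x) powr \<gamma>
                  * (A2 * (2 powr (real DIM('a) + \<alpha>)) * E x) powr (1 - \<gamma>)))
       + indicator {z. s < norm z} z * (A0 * E (x + z) + A0 * E x + (if 1 < \<alpha> then A1 * E x * norm z else 0)))
       * norm z powr (- real DIM('a) - \<alpha>)) \<partial>lborel)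
    \<le> ennreal ((K0c DIM('a) \<alpha> * A0 * s powr (-\<alpha>) + K1c DIM('a) \<alpha> * A1 * s powr (1 - \<alpha>)
        + K2c DIM('a) \<alpha> \<gamma> * (A1 powr \<gamma> * A2 powr (1 - \<gamma>)) * s powr (2 - \<gamma> - \<alpha>)) * E x)"
proof -
  define d where "d = DIM('a)"
  define m where "m = - real d - \<alpha>"
  define P where "P = 2 powr (real d + \<alpha>)"
  define Ex where "Ex = E x"
  have P: "0 < P" unfolding P_def by simp
  have xs: "0 < norm x + s" using s norm_ge_zero[of x] by linarith
  have Ex: "0 < Ex" unfolding Ex_def E using xs by simp
  define qN where "qN = (if \<alpha> < 1 then 1 - \<alpha> else 2 - \<gamma> - \<alpha>)"
  define cN where "cN = (if \<alpha> < 1 then A1 * P * Ex else (2 * A1 * P * Ex) powr \<gamma> * (A2 * P * Ex) powr (1 - \<gamma>))"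
  define g1 where "g1 z = indicator {z. norm z \<le> s} z * norm z powr (qN - real d)" for z :: 'a
  define g2 where "g2 z = indicator {z. s < norm z} z * ((norm (x + z) + s) powr m * norm z powr m)" for z :: 'a
  define g3 where "g3 z = indicator {z. s < norm z} z * norm z powr m" for z :: 'a
  define g4 where "g4 z = (if 1 < \<alpha> then indicator {z. s < norm z} z * norm z powr (- real d - (\<alpha> - 1)) else 0)" for z :: 'a
  define cd where "cd = (if 1 < \<alpha> then A1 * Ex else 0)"
  define B4 where "B4 = (if 1 < \<alpha> then KF d (\<alpha> - 1) * s powr (1 - \<alpha>) else 0)"
  have qN: "0 < qN" "qN \<le> real d" using a g dim unfolding qN_def d_def by auto
  have cN: "0 \<le> cN" unfolding cN_def using A P Ex by auto
  have kf1: "1 < \<alpha> \<Longrightarrow> 0 \<le> KF d (\<alpha> - 1)" using KF_pos[of "\<alpha> - 1" d] by auto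
  have cd: "0 \<le> cd" unfolding cd_def using A Ex by auto
  have "(\<integral>\<^sup>+ z. ennreal ((indicator {z. norm z \<le> s} z *
          (if \<alpha> < 1 then norm z * (A1 * (2 powr (real DIM('a) + \<alpha>)) * E x)
           else norm z powr (2 - \<gamma>) * ((2 * A1 * (2 powr (real DIM('a) + \<alpha>)) * E x) powr \<gamma>
                  * (A2 * (2 powr (real DIM('a) + \<alpha>)) * E x) powr (1 - \<gamma>)))
       + indicator {z. s < norm z} z * (A0 * E (x + z) + A0 * E x + (if 1 < \<alpha> then A1 * E x * norm z else 0)))
       * norm z powr (- real DIM('a) - \<alpha>)) \<partial>lborel)
    \<le> ennreal (cN * (KN d qN * s powr qN) + A0 * (K4 d \<alpha> * s powr (-\<alpha>) * Ex)
        + (A0 * Ex) * (KF d \<alpha> * s powr (-\<alpha>)) + cd * B4)"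
  proof (rule combine4[where ?g1.0 = g1 and ?g2.0 = g2 and ?g3.0 = g3 and ?g4.0 = g4])
    fix z :: 'a
    have EE: "E (x + z) = (norm (x + z) + s) powr m" unfolding E m_def d_def ..
    show "(indicator {z. norm z \<le> s} z *
          (if \<alpha> < 1 then norm z * (A1 * (2 powr (real DIM('a) + \<alpha>)) * E x)
           else norm z powr (2 - \<gamma>) * ((2 * A1 * (2 powr (real DIM('a) + \<alpha>)) * E x) powr \<gamma>
                  * (A2 * (2 powr (real DIM('a) + \<alpha>)) * E x) powr (1 - \<gamma>)))
       + indicator {z. s < norm z} z * (A0 * E (x + z) + A0 * E x + (if 1 < \<alpha> then A1 * E x * norm z else 0)))
       * norm z powr (- real DIM('a) - \<alpha>) \<le> cN * g1 z + A0 * g2 z + (A0 * Ex) * g3 z + cd * g4 z"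
    proof (cases "norm z \<le> s")
      case True
      then have g0: "g2 z = 0" "g3 z = 0" "g4 z = 0" unfolding g2_def g3_def g4_def by auto
      have "(if \<alpha> < 1 then norm z * (A1 * P * Ex)
           else norm z powr (2 - \<gamma>) * ((2 * A1 * P * Ex) powr \<gamma> * (A2 * P * Ex) powr (1 - \<gamma>)))
           * norm z powr m = cN * norm z powr (qN - real d)"
      proof (cases "\<alpha> < 1")
        case True
        have "norm z * norm z powr m = norm z powr (m + 1)" by (rule mult_powr_one) simp
        then show ?thesis using True unfolding cN_def qN_def m_def
          by (simp add: algebra_simps)
      next
        case False
        have "norm z powr (2 - \<gamma>) * norm z powr m = norm z powr (2 - \<gamma> + m)" by (rule powr_add[symmetric])
        then show ?thesis using False unfolding cN_def qN_def m_def
          by (simp add: algebra_simps)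
      qed
      then show ?thesis using True g0 unfolding g1_def P_def Ex_def m_def d_def by simp
    next
      case False
      then have g0: "g1 z = 0" unfolding g1_def by auto
      have "(A0 * E (x + z) + A0 * Ex + (if 1 < \<alpha> then A1 * Ex * norm z else 0)) * norm z powr m
          = A0 * g2 z + (A0 * Ex) * g3 z + cd * g4 z"
      proof -
        have "norm z * norm z powr m = norm z powr (- real d - (\<alpha> - 1))"
          using mult_powr_one[of "norm z" m] unfolding m_def by (simp add: algebra_simps)
        then show ?thesis using False unfolding g2_def g3_def g4_def cd_def EE
          by (simp add: algebra_simps)
      qed
      then show ?thesis using False g0 unfolding Ex_def m_def d_def by simp
    qed
  next
    show "g1 \<in> borel_measurable lborel" "g2 \<in> borel_measurable lborel"
      "g3 \<in> borel_measurable lborel" "g4 \<in> borel_measurable lborel"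
      unfolding g1_def g2_def g3_def g4_def by measurable
  next
    show "(\<integral>\<^sup>+ z. ennreal (g1 z) \<partial>lborel) \<le> ennreal (KN d qN * s powr qN)"
      unfolding g1_def d_def using near_int[OF s qN[unfolded d_def]] by simp
    show "(\<integral>\<^sup>+ z. ennreal (g2 z) \<partial>lborel) \<le> ennreal (K4 d \<alpha> * s powr (-\<alpha>) * Ex)"
      unfolding g2_def d_def m_def Ex_def E using conv_int[OF s a(1), of x] by simp
    show "(\<integral>\<^sup>+ z. ennreal (g3 z) \<partial>lborel) \<le> ennreal (KF d \<alpha> * s powr (-\<alpha>))"
      unfolding g3_def d_def m_def using far_int[OF s a(1), where 'a='a] by simp
    show "(\<integral>\<^sup>+ z. ennreal (g4 z) \<partial>lborel) \<le> ennreal B4"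
    proof (cases "1 < \<alpha>")
      case True
      have "0 < \<alpha> - 1" using True by simp
      from far_int[OF s this, where 'a='a] show ?thesis
        using True unfolding g4_def B4_def d_def by simp
    next
      case False
      then show ?thesis unfolding g4_def B4_def by simp
    qed
  qed (use A Ex cN cd qN s a kf1 KN_pos[OF qN(1), of d] KF_pos[OF a(1), of d] in
      \<open>auto simp: g1_def g2_def g3_def g4_def B4_def K4_def intro!: KF_pos add_nonneg_nonneg mult_nonneg_nonneg\<close>)
  also have "cN * (KN d qN * s powr qN) + A0 * (K4 d \<alpha> * s powr (-\<alpha>) * Ex)
        + (A0 * Ex) * (KF d \<alpha> * s powr (-\<alpha>)) + cd * B4
     \<le> (K0c DIM('a) \<alpha> * A0 * s powr (-\<alpha>) + K1c DIM('a) \<alpha> * A1 * s powr (1 - \<alpha>)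
        + K2c DIM('a) \<alpha> \<gamma> * (A1 powr \<gamma> * A2 powr (1 - \<gamma>)) * s powr (2 - \<gamma> - \<alpha>)) * E x"
  proof -
    have e0: "A0 * (K4 d \<alpha> * s powr (-\<alpha>) * Ex) + (A0 * Ex) * (KF d \<alpha> * s powr (-\<alpha>))
        = K0c DIM('a) \<alpha> * A0 * s powr (-\<alpha>) * Ex"
      unfolding K0c_def d_def by (simp add: algebra_simps)
    have e1: "cN * (KN d qN * s powr qN) + cd * B4
        \<le> K1c DIM('a) \<alpha> * A1 * s powr (1 - \<alpha>) * Ex
          + K2c DIM('a) \<alpha> \<gamma> * (A1 powr \<gamma> * A2 powr (1 - \<gamma>)) * s powr (2 - \<gamma> - \<alpha>) * Ex"
    proof (cases "\<alpha> < 1")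
      case True
      have "0 \<le> K2c DIM('a) \<alpha> \<gamma> * (A1 powr \<gamma> * A2 powr (1 - \<gamma>)) * s powr (2 - \<gamma> - \<alpha>) * Ex"
        unfolding K2c_def using KN_pos[of "2 - \<gamma> - \<alpha>" "DIM('a)"] g Ex by auto
      moreover have "cN * (KN d qN * s powr qN) + cd * B4 = K1c DIM('a) \<alpha> * A1 * s powr (1 - \<alpha>) * Ex"
        using True unfolding cN_def qN_def cd_def B4_def K1c_def P_def d_def by (simp add: algebra_simps)
      ultimately show ?thesis by linarith
    next
      case False
      have "cN = 2 powr \<gamma> * P * Ex * (A1 powr \<gamma> * A2 powr (1 - \<gamma>))"
        unfolding cN_def using False cN_eq[OF P Ex A(2) A(3)] by simp
      moreover have "2 powr \<gamma> \<le> (2::real)" using g powr_mono[of \<gamma> 1 2] by simp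
      ultimately have "cN \<le> 2 * P * Ex * (A1 powr \<gamma> * A2 powr (1 - \<gamma>))"
        using P Ex by (simp add: mult_right_mono)
      then have "cN * (KN d qN * s powr qN) \<le> (2 * P * Ex * (A1 powr \<gamma> * A2 powr (1 - \<gamma>))) * (KN d qN * s powr qN)"
        using KN_pos[OF qN(1), of d] s by (intro mult_right_mono) auto
      also have "\<dots> = K2c DIM('a) \<alpha> \<gamma> * (A1 powr \<gamma> * A2 powr (1 - \<gamma>)) * s powr (2 - \<gamma> - \<alpha>) * Ex"
        using False unfolding qN_def K2c_def P_def d_def by (simp add: algebra_simps)
      finally have n1: "cN * (KN d qN * s powr qN) \<le> K2c DIM('a) \<alpha> \<gamma> * (A1 powr \<gamma> * A2 powr (1 - \<gamma>)) * s powr (2 - \<gamma> - \<alpha>) * Ex" .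
      have n2: "cd * B4 = K1c DIM('a) \<alpha> * A1 * s powr (1 - \<alpha>) * Ex"
        using False unfolding cd_def B4_def K1c_def d_def by (simp add: algebra_simps)
      show ?thesis using n1 n2 by linarith
    qed
    show ?thesis using e0 e1 unfolding Ex_def by (simp add: algebra_simps)
  qed
  finally show ?thesis by (simp add: ennreal_leI)
qed



lemma core:
  fixes f :: "'a::euclidean_space \<Rightarrow> real" and Df :: "'a \<Rightarrow> ('a \<Rightarrow>\<^sub>L real)"
    and D2 :: "'a \<Rightarrow> ('a \<Rightarrow>\<^sub>L ('a \<Rightarrow>\<^sub>L real))" and E J :: "'a \<Rightarrow> real"
  assumes s: "0 < s" and a: "0 < \<alpha>" "\<alpha> < 2" and g: "0 \<le> \<gamma>" "\<gamma> < min (2 - \<alpha>) 1"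
    and dim: "2 \<le> DIM('a)"
    and Jm: "J \<in> borel_measurable lborel" and Jb: "\<And>z. \<bar>J z\<bar> \<le> Jn"
    and cancel: "\<forall>r R. 0 < r \<longrightarrow> r < R \<longrightarrow>
         (LINT z:{z. r < norm z \<and> norm z \<le> R}|lborel.
            (J z * norm z powr (- real DIM('a) - 1)) *\<^sub>R z) = 0"
    and df: "\<And>y. (f has_derivative blinfun_apply (Df y)) (at y)"
    and d2: "\<And>y. (Df has_derivative blinfun_apply (D2 y)) (at y)"
    and A: "0 \<le> A0" "0 \<le> A1" "0 \<le> A2"
    and b0: "\<And>y. \<bar>f y\<bar> \<le> A0 * E y" and b1: "\<And>y. norm (Df y) \<le> A1 * E y"
    and b2: "\<And>y. norm (D2 y) \<le> A2 * E y"
    and E: "\<And>y. E y = (norm y + s) powr (- real DIM('a) - \<alpha>)"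
  shows "\<bar>opLJ \<alpha> J f x\<bar> \<le> Jn * ((K0c DIM('a) \<alpha> * A0 * s powr (-\<alpha>) + K1c DIM('a) \<alpha> * A1 * s powr (1 - \<alpha>)
        + K2c DIM('a) \<alpha> \<gamma> * (A1 powr \<gamma> * A2 powr (1 - \<gamma>)) * s powr (2 - \<gamma> - \<alpha>)) * E x)"
proof -
  define m where "m = - real DIM('a) - \<alpha>"
  define Bnd where "Bnd = (K0c DIM('a) \<alpha> * A0 * s powr (-\<alpha>) + K1c DIM('a) \<alpha> * A1 * s powr (1 - \<alpha>)
        + K2c DIM('a) \<alpha> \<gamma> * (A1 powr \<gamma> * A2 powr (1 - \<gamma>)) * s powr (2 - \<gamma> - \<alpha>)) * E x"
  define w where "w z = (if \<alpha> < 1 then 0 else if \<alpha> = 1 then (if norm z \<le> s then z else 0) else z)" for z :: 'a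
  define H where "H z = indicator {z. norm z \<le> s} z *
          (if \<alpha> < 1 then norm z * (A1 * (2 powr (real DIM('a) + \<alpha>)) * E x)
           else norm z powr (2 - \<gamma>) * ((2 * A1 * (2 powr (real DIM('a) + \<alpha>)) * E x) powr \<gamma>
                  * (A2 * (2 powr (real DIM('a) + \<alpha>)) * E x) powr (1 - \<gamma>)))
       + indicator {z. s < norm z} z * (A0 * E (x + z) + A0 * E x + (if 1 < \<alpha> then A1 * E x * norm z else 0))" for z
  define \<Psi> where "\<Psi> z = (f (x + z) - f x - blinfun_apply (Df x) (w z)) * J z * norm z powr m" for z
  have Jn: "0 \<le> Jn" using Jb[of 0] by simp
  have Eeq: "E = (\<lambda>y. (norm y + s) powr (- real DIM('a) - \<alpha>))" using E by (intro ext) simp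
  have gg: "\<gamma> \<le> 1" using g by simp
  have pw: "\<bar>f (x + z) - f x - blinfun_apply (Df x) (w z)\<bar> \<le> H z" for z
    unfolding w_def H_def by (rule pw_bound[OF s a(1) g(1) gg df d2 A b0 b1 b2 E])
  have intH: "(\<integral>\<^sup>+ z. ennreal (H z * norm z powr m) \<partial>lborel) \<le> ennreal Bnd"
    unfolding H_def m_def Bnd_def by (rule int_bound[OF s a g dim A E])
  have Hnn: "0 \<le> H z" for z using pw[of z] by linarith
  have Hm: "(\<lambda>z. H z * norm z powr m) \<in> borel_measurable lborel"
    unfolding H_def Eeq by measurable
  have Bnd: "0 \<le> Bnd"
  proof -
    have "(0::ennreal) \<le> (\<integral>\<^sup>+ z. ennreal (H z * norm z powr m) \<partial>lborel)" by simp
    have "0 \<le> K1c DIM('a) \<alpha>" unfolding K1c_def by (auto intro!: mult_nonneg_nonneg less_imp_le[OF KN_pos] less_imp_le[OF KF_pos])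
    moreover have "0 \<le> K0c DIM('a) \<alpha>" unfolding K0c_def K4_def using KF_pos[OF a(1), of "DIM('a)"]
      by (intro add_nonneg_nonneg mult_nonneg_nonneg) auto
    moreover have "0 \<le> K2c DIM('a) \<alpha> \<gamma>" unfolding K2c_def using KN_pos[of "2 - \<gamma> - \<alpha>" "DIM('a)"] g by auto
    moreover have "0 \<le> E x" using E by simp
    ultimately show ?thesis unfolding Bnd_def using A by (auto intro!: add_nonneg_nonneg mult_nonneg_nonneg)
  qed
  have normPsi: "(\<integral>\<^sup>+ z. ennreal (norm (\<Psi> z)) \<partial>lborel) \<le> ennreal (Jn * Bnd)"
  proof -
    have "(\<integral>\<^sup>+ z. ennreal (norm (\<Psi> z)) \<partial>lborel) \<le> (\<integral>\<^sup>+ z. ennreal Jn * ennreal (H z * norm z powr m) \<partial>lborel)"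
    proof (rule nn_integral_mono)
      fix z :: 'a
      have "norm (\<Psi> z) = \<bar>f (x + z) - f x - blinfun_apply (Df x) (w z)\<bar> * \<bar>J z\<bar> * norm z powr m"
        unfolding \<Psi>_def by (simp add: abs_mult)
      also have "\<dots> \<le> H z * Jn * norm z powr m"
        using pw[of z] Jb[of z] Hnn[of z] by (intro mult_right_mono mult_mono) auto
      finally have "norm (\<Psi> z) \<le> Jn * (H z * norm z powr m)" by (simp add: mult_ac)
      then have "ennreal (norm (\<Psi> z)) \<le> ennreal (Jn * (H z * norm z powr m))" by (rule ennreal_leI)
      also have "\<dots> = ennreal Jn * ennreal (H z * norm z powr m)"
        using Jn Hnn[of z] by (subst ennreal_mult) auto
      finally show "ennreal (norm (\<Psi> z)) \<le> ennreal Jn * ennreal (H z * norm z powr m)" .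
    qed
    also have "\<dots> = ennreal Jn * (\<integral>\<^sup>+ z. ennreal (H z * norm z powr m) \<partial>lborel)"
      by (rule nn_integral_cmult) (use Hm in measurable)
    also have "\<dots> \<le> ennreal Jn * ennreal Bnd" by (intro mult_left_mono intH) auto
    also have "\<dots> = ennreal (Jn * Bnd)" using Jn Bnd by (subst ennreal_mult) auto
    finally show ?thesis .
  qed
  have bndPsi: "\<bar>LINT z|lborel. \<Psi> z\<bar> \<le> Jn * Bnd"
  proof (cases "integrable lborel \<Psi>")
    case True
    have "ennreal (norm (LINT z|lborel. \<Psi> z)) \<le> (\<integral>\<^sup>+ z. ennreal (norm (\<Psi> z)) \<partial>lborel)"
      using integral_norm_bound_ennreal[OF True] by simp
    also have "\<dots> \<le> ennreal (Jn * Bnd)" by (rule normPsi)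
    finally show ?thesis using Jn Bnd by (simp add: ennreal_le_iff)
  next
    case False
    then show ?thesis using Jn Bnd by (simp add: not_integrable_integral_eq)
  qed
  have fr: "frechet_derivative f (at x) = blinfun_apply (Df x)"
    using frechet_derivative_at[OF df[of x]] by simp
  have op: "opLJ \<alpha> J f x = (LINT z|lborel. \<Psi> z)"
  proof (cases "\<alpha> = 1")
    case False
    have "zalpha \<alpha> z = w z" for z using False a unfolding zalpha_def w_def by auto
    then show ?thesis unfolding opLJ_def fr \<Psi>_def m_def by simp
  next
    case a1: True
    have fc: "continuous_on UNIV f"
      using df by (intro differentiable_imp_continuous_on) (auto simp: differentiable_on_def differentiable_def)
    have fm[measurable]: "f \<in> borel_measurable borel" using fc by (rule borel_measurable_continuous_onI)
    have Dm[measurable]: "blinfun_apply (Df x) \<in> borel_measurable borel"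
      by (intro borel_measurable_continuous_onI linear_continuous_on blinfun.bounded_linear_right)
    have Jm'[measurable]: "J \<in> borel_measurable borel" using Jm by simp
    have Psim: "\<Psi> \<in> borel_measurable lborel" unfolding \<Psi>_def w_def by measurable
    have Psii: "integrable lborel \<Psi>"
      by (rule integrableI_bounded[OF Psim]) (use normPsi in \<open>auto simp: top_unique intro: le_less_trans\<close>)
    define r0 where "r0 = min s 1"
    define R0 where "R0 = max s 1"
    define Aset where "Aset = {z::'a. r0 < norm z \<and> norm z \<le> R0}"
    define \<sigma> where "\<sigma> = (if s \<le> 1 then -1 else (1::real))"
    define F where "F z = (J z * norm z powr (- real DIM('a) - 1)) *\<^sub>R z" for z
    define V where "V z = indicator Aset z *\<^sub>R F z" for z
    have r0: "0 < r0" unfolding r0_def using s by simp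
    have Aset[measurable]: "Aset \<in> sets lborel" unfolding Aset_def by measurable
    have Fm[measurable]: "F \<in> borel_measurable lborel" unfolding F_def by measurable
    have Vi: "integrable lborel V"
      unfolding V_def
    proof (rule integrableI_bounded_set_indicator[where B = "Jn * r0 powr (- real DIM('a))"])
      show "Aset \<in> sets lborel" by (rule Aset)
      show "F \<in> borel_measurable lborel" by (rule Fm)
      have "Aset \<subseteq> cball 0 R0" unfolding Aset_def by auto
      then have "emeasure lborel Aset \<le> emeasure lborel (cball (0::'a) R0)"
        by (intro emeasure_mono) auto
      then show "emeasure lborel Aset < \<infinity>" using emeasure_lborel_cball_finite[of "0::'a" R0]
        by (auto intro: le_less_trans)
      show "AE z\<in>Aset in lborel. norm (F z) \<le> Jn * r0 powr (- real DIM('a))"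
      proof (intro AE_I2 impI)
        fix z assume z: "z \<in> Aset"
        then have nz: "r0 < norm z" unfolding Aset_def by simp
        then have nzp: "0 < norm z" using r0 by linarith
        have "norm (F z) = \<bar>J z\<bar> * (norm z powr (- real DIM('a) - 1) * norm z)"
          unfolding F_def by (simp add: abs_mult)
        also have "norm z powr (- real DIM('a) - 1) * norm z = norm z powr (- real DIM('a))"
          using mult_powr_one[of "norm z" "- real DIM('a) - 1"] by (simp add: mult.commute)
        also have "\<bar>J z\<bar> * norm z powr (- real DIM('a)) \<le> Jn * r0 powr (- real DIM('a))"
          using Jb[of z] nz r0 Jn by (intro mult_mono powr_mono2') auto
        finally show "norm (F z) \<le> Jn * r0 powr (- real DIM('a))" .
      qed
    qed
    have V0: "(LINT z|lborel. V z) = 0"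
    proof (cases "s = 1")
      case True
      then have "V = (\<lambda>z. 0)" unfolding V_def Aset_def r0_def R0_def by (auto simp: fun_eq_iff)
      then show ?thesis by simp
    next
      case False
      then have "r0 < R0" unfolding r0_def R0_def by auto
      with cancel r0 have "(LINT z:{z. r0 < norm z \<and> norm z \<le> R0}|lborel. F z) = 0"
        unfolding F_def by blast
      then show ?thesis unfolding V_def Aset_def set_lebesgue_integral_def .
    qed
    have DV: "(LINT z|lborel. blinfun_apply (Df x) (V z)) = 0"
      using integral_bounded_linear[OF blinfun.bounded_linear_right Vi, of "Df x"] V0
      by (simp add: blinfun.zero_right)
    have DVi: "integrable lborel (\<lambda>z. \<sigma> * blinfun_apply (Df x) (V z))"
      by (intro integrable_mult_right integrable_bounded_linear[OF blinfun.bounded_linear_right Vi])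
    have pt: "(f (x + z) - f x - blinfun_apply (Df x) (zalpha \<alpha> z)) * J z * norm z powr (- real DIM('a) - \<alpha>)
        = \<Psi> z + \<sigma> * blinfun_apply (Df x) (V z)" for z
    proof -
      have "blinfun_apply (Df x) (w z) - blinfun_apply (Df x) (zalpha \<alpha> z)
          = \<sigma> * indicator Aset z * blinfun_apply (Df x) z"
        unfolding w_def zalpha_def \<sigma>_def Aset_def r0_def R0_def using a1
        by (auto simp: blinfun.zero_right indicator_def)
      moreover have "blinfun_apply (Df x) (V z) = indicator Aset z * (J z * norm z powr (- real DIM('a) - 1)) * blinfun_apply (Df x) z"
        unfolding V_def F_def by (simp add: blinfun.scaleR_right)
      ultimately show ?thesis unfolding \<Psi>_def m_def using a1 by (simp add: algebra_simps)
    qed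
    have "opLJ \<alpha> J f x = (LINT z|lborel. \<Psi> z + \<sigma> * blinfun_apply (Df x) (V z))"
      unfolding opLJ_def fr pt ..
    also have "\<dots> = (LINT z|lborel. \<Psi> z) + (LINT z|lborel. \<sigma> * blinfun_apply (Df x) (V z))"
      by (rule Bochner_Integration.integral_add[OF Psii DVi])
    also have "(LINT z|lborel. \<sigma> * blinfun_apply (Df x) (V z)) = 0"
      using DV by simp
    finally show ?thesis by simp
  qed
  show ?thesis using bndPsi op unfolding Bnd_def by simp
qed



lemma sq_powr: "0 < (t::real) \<Longrightarrow> t powr (c / 2) = sqrt t powr c"
  by (simp add: powr_half_sqrt[symmetric] powr_powr)

theorem lemma2p2:
  fixes \<alpha> \<gamma> :: real
  assumes "DIM('a::euclidean_space) \<ge> 2"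
    and "0 < \<alpha>" and "\<alpha> < 2"
    and "0 \<le> \<gamma>" and "\<gamma> < min (2 - \<alpha>) 1"
  shows "\<exists>C>0. \<forall>(J :: 'a \<Rightarrow> real) (T :: real) (G :: real \<Rightarrow> 'a \<Rightarrow> real)
      (G' :: real \<Rightarrow> 'a \<Rightarrow> ('a \<Rightarrow>\<^sub>L real)) (G'' :: real \<Rightarrow> 'a \<Rightarrow> ('a \<Rightarrow>\<^sub>L ('a \<Rightarrow>\<^sub>L real)))
      (C0 :: real) C1 C2 (\<beta>0 :: real) \<beta>1 \<beta>2.
      J \<in> borel_measurable lborel \<and> bounded (range J) \<and>
      (\<forall>r R. 0 < r \<longrightarrow> r < R \<longrightarrow>
         (LINT z:{z. r < norm z \<and> norm z \<le> R}|lborel.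
            (J z * norm z powr (- real DIM('a) - 1)) *\<^sub>R z) = 0) \<and>
      0 < T \<and>
      (\<forall>t\<in>{0<..<T}. (\<forall>x. (G t has_derivative blinfun_apply (G' t x)) (at x)) \<and>
                     (\<forall>x. (G' t has_derivative blinfun_apply (G'' t x)) (at x)) \<and>
                     continuous_on UNIV (G'' t)) \<and>
      0 < C0 \<and> 0 < C1 \<and> 0 < C2 \<and> 0 \<le> \<beta>0 \<and> 0 \<le> \<beta>1 \<and> 0 \<le> \<beta>2 \<and>
      (\<forall>t\<in>{0<..<T}. \<forall>x. \<bar>G t x\<bar> \<le> C0 * eta \<alpha> (\<alpha> - \<beta>0) t x) \<and>
      (\<forall>t\<in>{0<..<T}. \<forall>x. norm (G' t x) \<le> C1 * eta \<alpha> (\<alpha> - \<beta>1 - 1) t x) \<and>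
      (\<forall>t\<in>{0<..<T}. \<forall>x. norm (G'' t x) \<le> C2 * eta \<alpha> (\<alpha> - \<beta>2 - 2) t x)
      \<longrightarrow>
      (\<forall>t\<in>{0<..<T}. \<forall>x.
         \<bar>opLJ \<alpha> J (G t) x\<bar> \<le> C * supnorm J *
           (C0 * t powr (- \<beta>0 / 2) + C1 * t powr (- \<beta>1 / 2)
            + C1 powr \<gamma> * C2 powr (1 - \<gamma>) * t powr (- (\<gamma> * \<beta>1 + (1 - \<gamma>) * \<beta>2) / 2))
           * eta \<alpha> 0 t x)"
proof -
  define d where "d = DIM('a)"
  define C where "C = K0c d \<alpha> + K1c d \<alpha> + K2c d \<alpha> \<gamma>"
  have a: "0 < \<alpha>" "\<alpha> < 2" using assms by auto
  have g: "0 \<le> \<gamma>" "\<gamma> < min (2 - \<alpha>) 1" using assms by auto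
  have K0: "0 < K0c d \<alpha>" unfolding K0c_def K4_def using KF_pos[OF a(1), of d]
    by (intro add_pos_nonneg add_nonneg_nonneg mult_nonneg_nonneg) auto
  have K1: "0 \<le> K1c d \<alpha>" unfolding K1c_def
    by (auto intro!: mult_nonneg_nonneg less_imp_le[OF KN_pos] less_imp_le[OF KF_pos])
  have K2: "0 \<le> K2c d \<alpha> \<gamma>" unfolding K2c_def using KN_pos[of "2 - \<gamma> - \<alpha>" d] g by auto
  show ?thesis
  proof (intro exI[of _ C] conjI allI impI ballI)
    show "0 < C" unfolding C_def using K0 K1 K2 by linarith
  next
    fix J :: "'a \<Rightarrow> real" and T :: real and G :: "real \<Rightarrow> 'a \<Rightarrow> real"
      and G' :: "real \<Rightarrow> 'a \<Rightarrow> ('a \<Rightarrow>\<^sub>L real)" and G'' :: "real \<Rightarrow> 'a \<Rightarrow> ('a \<Rightarrow>\<^sub>L ('a \<Rightarrow>\<^sub>L real))"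
      and C0 C1 C2 \<beta>0 \<beta>1 \<beta>2 :: real and t :: real and x :: 'a
    assume H: "J \<in> borel_measurable lborel \<and> bounded (range J) \<and>
      (\<forall>r R. 0 < r \<longrightarrow> r < R \<longrightarrow>
         (LINT z:{z. r < norm z \<and> norm z \<le> R}|lborel.
            (J z * norm z powr (- real DIM('a) - 1)) *\<^sub>R z) = 0) \<and>
      0 < T \<and>
      (\<forall>t\<in>{0<..<T}. (\<forall>x. (G t has_derivative blinfun_apply (G' t x)) (at x)) \<and>
                     (\<forall>x. (G' t has_derivative blinfun_apply (G'' t x)) (at x)) \<and>
                     continuous_on UNIV (G'' t)) \<and>
      0 < C0 \<and> 0 < C1 \<and> 0 < C2 \<and> 0 \<le> \<beta>0 \<and> 0 \<le> \<beta>1 \<and> 0 \<le> \<beta>2 \<and>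
      (\<forall>t\<in>{0<..<T}. \<forall>x. \<bar>G t x\<bar> \<le> C0 * eta \<alpha> (\<alpha> - \<beta>0) t x) \<and>
      (\<forall>t\<in>{0<..<T}. \<forall>x. norm (G' t x) \<le> C1 * eta \<alpha> (\<alpha> - \<beta>1 - 1) t x) \<and>
      (\<forall>t\<in>{0<..<T}. \<forall>x. norm (G'' t x) \<le> C2 * eta \<alpha> (\<alpha> - \<beta>2 - 2) t x)"
    assume t: "t \<in> {0<..<T}"
    have tp: "0 < t" using t by simp
    define s where "s = sqrt t"
    have s: "0 < s" unfolding s_def using tp by simp
    define m where "m = - real DIM('a) - \<alpha>"
    define E where "E y = (norm y + s) powr m" for y :: 'a
    define A0 where "A0 = C0 * s powr (\<alpha> - \<beta>0)"
    define A1 where "A1 = C1 * s powr (\<alpha> - \<beta>1 - 1)"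
    define A2 where "A2 = C2 * s powr (\<alpha> - \<beta>2 - 2)"
    have Cs: "0 < C0" "0 < C1" "0 < C2" using H by auto
    have eta_eq: "eta \<alpha> c t y = s powr c * E y" for c y
      unfolding eta_def E_def m_def s_def using sq_powr[OF tp] by simp
    have bJ: "\<bar>J z\<bar> \<le> supnorm J" for z
    proof -
      have "bounded (range J)" using H by simp
      then obtain B where "\<forall>y\<in>range J. norm y \<le> B" by (auto simp: bounded_iff)
      then have "bdd_above (range (\<lambda>z. \<bar>J z\<bar>))" by (auto intro!: bdd_aboveI2)
      then show ?thesis unfolding supnorm_def by (intro cSUP_upper) auto
    qed
    have main: "\<bar>opLJ \<alpha> J (G t) x\<bar> \<le> supnorm J * ((K0c DIM('a) \<alpha> * A0 * s powr (-\<alpha>) + K1c DIM('a) \<alpha> * A1 * s powr (1 - \<alpha>)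
        + K2c DIM('a) \<alpha> \<gamma> * (A1 powr \<gamma> * A2 powr (1 - \<gamma>)) * s powr (2 - \<gamma> - \<alpha>)) * E x)"
    proof (rule core[where ?D2.0 = "G'' t" and E = E])
      show "0 < s" by (rule s)
      show "0 < \<alpha>" "\<alpha> < 2" "0 \<le> \<gamma>" "\<gamma> < min (2 - \<alpha>) 1" using a g by auto
      show "2 \<le> DIM('a)" using assms by simp
      show "J \<in> borel_measurable lborel" using H by simp
      show "\<And>z. \<bar>J z\<bar> \<le> supnorm J" by (rule bJ)
      show "\<forall>r R. 0 < r \<longrightarrow> r < R \<longrightarrow> (LINT z:{z. r < norm z \<and> norm z \<le> R}|lborel.
            (J z * norm z powr (- real DIM('a) - 1)) *\<^sub>R z) = 0" using H by simp
      show "\<And>y. (G t has_derivative blinfun_apply (G' t y)) (at y)" using H t by blast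
      show "\<And>y. (G' t has_derivative blinfun_apply (G'' t y)) (at y)" using H t by blast
      show "0 \<le> A0" "0 \<le> A1" "0 \<le> A2" unfolding A0_def A1_def A2_def using Cs by auto
      have h0: "\<forall>x. \<bar>G t x\<bar> \<le> C0 * eta \<alpha> (\<alpha> - \<beta>0) t x" using H t by blast
      have h1: "\<forall>x. norm (G' t x) \<le> C1 * eta \<alpha> (\<alpha> - \<beta>1 - 1) t x" using H t by blast
      have h2: "\<forall>x. norm (G'' t x) \<le> C2 * eta \<alpha> (\<alpha> - \<beta>2 - 2) t x" using H t by blast
      show "\<And>y. \<bar>G t y\<bar> \<le> A0 * E y" using h0 unfolding A0_def eta_eq by (simp add: mult.assoc)
      show "\<And>y. norm (G' t y) \<le> A1 * E y" using h1 unfolding A1_def eta_eq by (simp add: mult.assoc)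
      show "\<And>y. norm (G'' t y) \<le> A2 * E y" using h2 unfolding A2_def eta_eq by (simp add: mult.assoc)
      show "\<And>y. E y = (norm y + s) powr (- real DIM('a) - \<alpha>)" unfolding E_def m_def ..
    qed
    define X0 where "X0 = C0 * t powr (- \<beta>0 / 2)"
    define X1 where "X1 = C1 * t powr (- \<beta>1 / 2)"
    define X2 where "X2 = C1 powr \<gamma> * C2 powr (1 - \<gamma>) * t powr (- (\<gamma> * \<beta>1 + (1 - \<gamma>) * \<beta>2) / 2)"
    have x0: "A0 * s powr (-\<alpha>) = X0"
      unfolding A0_def X0_def sq_powr[OF tp] s_def by (simp add: powr_add[symmetric] mult.assoc)
    have x1: "A1 * s powr (1 - \<alpha>) = X1"
      unfolding A1_def X1_def sq_powr[OF tp] s_def by (simp add: powr_add[symmetric] mult.assoc)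
    have x2: "(A1 powr \<gamma> * A2 powr (1 - \<gamma>)) * s powr (2 - \<gamma> - \<alpha>) = X2"
    proof -
      have "A1 powr \<gamma> = C1 powr \<gamma> * s powr ((\<alpha> - \<beta>1 - 1) * \<gamma>)"
        unfolding A1_def using Cs s by (simp add: powr_mult powr_powr)
      moreover have "A2 powr (1 - \<gamma>) = C2 powr (1 - \<gamma>) * s powr ((\<alpha> - \<beta>2 - 2) * (1 - \<gamma>))"
        unfolding A2_def using Cs s by (simp add: powr_mult powr_powr)
      moreover have "s powr ((\<alpha> - \<beta>1 - 1) * \<gamma>) * s powr ((\<alpha> - \<beta>2 - 2) * (1 - \<gamma>)) * s powr (2 - \<gamma> - \<alpha>)
          = s powr (- (\<gamma> * \<beta>1 + (1 - \<gamma>) * \<beta>2))"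
      proof -
        have "s powr ((\<alpha> - \<beta>1 - 1) * \<gamma>) * s powr ((\<alpha> - \<beta>2 - 2) * (1 - \<gamma>)) * s powr (2 - \<gamma> - \<alpha>)
          = s powr ((\<alpha> - \<beta>1 - 1) * \<gamma> + (\<alpha> - \<beta>2 - 2) * (1 - \<gamma>) + (2 - \<gamma> - \<alpha>))"
          by (simp add: powr_add)
        also have "(\<alpha> - \<beta>1 - 1) * \<gamma> + (\<alpha> - \<beta>2 - 2) * (1 - \<gamma>) + (2 - \<gamma> - \<alpha>) = - (\<gamma> * \<beta>1 + (1 - \<gamma>) * \<beta>2)"
          by (simp add: algebra_simps)
        finally show ?thesis .
      qed
      moreover have "t powr (- (\<gamma> * \<beta>1 + (1 - \<gamma>) * \<beta>2) / 2) = s powr (- (\<gamma> * \<beta>1 + (1 - \<gamma>) * \<beta>2))"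
        unfolding s_def by (rule sq_powr[OF tp])
      ultimately show ?thesis unfolding X2_def by (simp add: mult_ac)
    qed
    have Ex: "eta \<alpha> 0 t x = E x" using eta_eq[of 0 x] s by simp
    have Xs: "0 \<le> X0" "0 \<le> X1" "0 \<le> X2" unfolding X0_def X1_def X2_def using Cs by auto
    have Jn: "0 \<le> supnorm J" using bJ[of x] by linarith
    have E0: "0 \<le> E x" unfolding E_def by simp
    have "K0c DIM('a) \<alpha> * X0 + K1c DIM('a) \<alpha> * X1 + K2c DIM('a) \<alpha> \<gamma> * X2 \<le> C * (X0 + X1 + X2)"
    proof -
      have "K0c DIM('a) \<alpha> * X0 \<le> C * X0" unfolding C_def d_def using K1 K2 Xs by (intro mult_right_mono) (auto simp: d_def)
      moreover have "K1c DIM('a) \<alpha> * X1 \<le> C * X1" unfolding C_def d_def using K0 K2 Xs by (intro mult_right_mono) (auto simp: d_def)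
      moreover have "K2c DIM('a) \<alpha> \<gamma> * X2 \<le> C * X2" unfolding C_def d_def using K0 K1 Xs by (intro mult_right_mono) (auto simp: d_def)
      ultimately show ?thesis by (simp add: algebra_simps)
    qed
    then have "supnorm J * ((K0c DIM('a) \<alpha> * X0 + K1c DIM('a) \<alpha> * X1 + K2c DIM('a) \<alpha> \<gamma> * X2) * E x)
        \<le> supnorm J * ((C * (X0 + X1 + X2)) * E x)"
      using Jn E0 by (intro mult_left_mono mult_right_mono) auto
    moreover have "(K0c DIM('a) \<alpha> * A0 * s powr (-\<alpha>) + K1c DIM('a) \<alpha> * A1 * s powr (1 - \<alpha>)
        + K2c DIM('a) \<alpha> \<gamma> * (A1 powr \<gamma> * A2 powr (1 - \<gamma>)) * s powr (2 - \<gamma> - \<alpha>))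
        = K0c DIM('a) \<alpha> * X0 + K1c DIM('a) \<alpha> * X1 + K2c DIM('a) \<alpha> \<gamma> * X2"
      using x0 x1 x2 by (simp add: mult.assoc)
    ultimately have "\<bar>opLJ \<alpha> J (G t) x\<bar> \<le> supnorm J * ((C * (X0 + X1 + X2)) * E x)"
      using main by simp
    then show "\<bar>opLJ \<alpha> J (G t) x\<bar> \<le> C * supnorm J *
           (C0 * t powr (- \<beta>0 / 2) + C1 * t powr (- \<beta>1 / 2)
            + C1 powr \<gamma> * C2 powr (1 - \<gamma>) * t powr (- (\<gamma> * \<beta>1 + (1 - \<gamma>) * \<beta>2) / 2))
           * eta \<alpha> 0 t x"
      unfolding Ex X0_def[symmetric] X1_def[symmetric] X2_def[symmetric] by (simp add: mult_ac)
  qed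
qed


end
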